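(* For all $n\ge2$, viewing $\Delta^{n-1}$ as a facet of $\Delta^n$ (so $\Delta^n=v*\Delta^{n-1}$), the inclusion $\mathcal{M}(\Delta^{n-1})\hookrightarrow\mathcal{M}(\Delta^n)$ sending each pair to itself is null-homotopic, the long exact sequence in reduced homology of the pair $(\mathcal{M}(\Delta^n),\mathcal{M}(\Delta^{n-1}))$ splits into short exact sequences, and $$\tilde H_k(\mathcal{M}(\Delta^n),\mathcal{M}(\Delta^{n-1}))\cong\tilde H_k(\mathcal{M}(\Delta^n))\oplus\tilde H_{k-1}(\mathcal{M}(\Delta^{n-1}))$$ for all $k$.
   Context: All simplicial complexes are finite abstract simplicial complexes; simplices are nonempty. $\Delta^n$ is the simplicial complex of all nonempty subsets of an $(n+1)$-element vertex set. The Hasse diagram $\mathcal{H}(K)$ of $K$ is the directed graph whose vertices are the simplices of $K$, with an edge $\sigma\to\tau$ whenever $\sigma\subsetneq\tau$ and $\dim\tau=\dim\sigma+1$. A matching on $\mathcal{H}(K)$ is a set $W$ of edges of $\mathcal{H}(K)$, no two sharing a vertex; an edge in $W$ is called a pair. $W$ is acyclic if the directed graph obtained from $\mathcal{H}(K)$ by reversing every edge in $W$ has no directed cycle. The complex of discrete Morse matchings $\mathcal{M}(K)$ is the simplicial complex whose vertices are the edges of $\mathcal{H}(K)$ and whose simplices are the nonempty acyclic matchings on $\mathcal{H}(K)$. *)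

theory Defs
  imports "HOL-Homology.Homology"
begin

text \<open>Finite abstract simplicial complexes are represented by their set of simplices
  (nonempty finite vertex sets).\<close>

definition full_simplex :: "'v set \<Rightarrow> 'v set set" where
  "full_simplex V = {\<sigma>. \<sigma> \<subseteq> V \<and> \<sigma> \<noteq> {}}"

text \<open>Delta^n on the vertex set {0..n}; Delta^(n-1) on {0..<n} is the facet opposite v = n.\<close>
definition Delta :: "nat \<Rightarrow> nat set set" where
  "Delta n = full_simplex {0..n}"

definition hasse_edges :: "'v set set \<Rightarrow> ('v set \<times> 'v set) set" where
  "hasse_edges K = {(\<sigma>, \<tau>). \<sigma> \<in> K \<and> \<tau> \<in> K \<and> \<sigma> \<subset> \<tau> \<and> card \<tau> = card \<sigma> + 1}"

definition is_matching :: "'v set set \<Rightarrow> ('v set \<times> 'v set) set \<Rightarrow> bool" where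
  "is_matching K W \<longleftrightarrow> W \<subseteq> hasse_edges K \<and>
     (\<forall>e\<in>W. \<forall>e'\<in>W. e \<noteq> e' \<longrightarrow> {fst e, snd e} \<inter> {fst e', snd e'} = {})"

definition modified_hasse :: "'v set set \<Rightarrow> ('v set \<times> 'v set) set \<Rightarrow> ('v set \<times> 'v set) set" where
  "modified_hasse K W = (hasse_edges K - W) \<union> {(\<tau>, \<sigma>). (\<sigma>, \<tau>) \<in> W}"

definition acyclic_matching :: "'v set set \<Rightarrow> ('v set \<times> 'v set) set \<Rightarrow> bool" where
  "acyclic_matching K W \<longleftrightarrow> is_matching K W \<and> acyclic (modified_hasse K W)"

definition morse_complex :: "'v set set \<Rightarrow> ('v set \<times> 'v set) set set" where
  "morse_complex K = {W. W \<noteq> {} \<and> acyclic_matching K W}"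

definition realization :: "'a set set \<Rightarrow> ('a \<Rightarrow> real) topology" where
  "realization K = subtopology (powertop_real UNIV)
     {f. (\<forall>v. 0 \<le> f v) \<and> {v. f v \<noteq> 0} \<in> K \<and> sum f {v. f v \<noteq> 0} = 1}"

end

theory Submission
  imports Defs
begin

lemma triv_inclusion_reduced:
  assumes "S \<subseteq> C" "contractible_space (subtopology X C)"
    and c: "c \<in> carrier (reduced_homology_group k (subtopology X S))"
  shows "hom_induced k (subtopology X S) {} X {} id c = \<one>\<^bsub>reduced_homology_group k X\<^esub>"
proof -
  have e: "hom_induced k (subtopology X C) {} X {} id (hom_induced k (subtopology X S) {} (subtopology X C) {} id c)
     = hom_induced k (subtopology X S) {} X {} (id \<circ> id) c"
    by (rule hom_induced_compose') (use assms in \<open>auto simp: continuous_map_from_subtopology continuous_map_in_subtopology\<close>)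
  have "hom_induced k (subtopology X S) {} (subtopology X C) {} id c \<in> carrier (reduced_homology_group k (subtopology X C))"
    by (rule hom_induced_reduced[OF c])
  then have "hom_induced k (subtopology X S) {} (subtopology X C) {} id c = \<one>\<^bsub>homology_group k (subtopology X C)\<^esub>"
    using trivial_reduced_homology_group_contractible_space[OF assms(2), of k]
    by (simp add: trivial_group_def one_reduced_homology_group)
  with e have "hom_induced k (subtopology X S) {} X {} id c = hom_induced k (subtopology X C) {} X {} id \<one>\<^bsub>homology_group k (subtopology X C)\<^esub>"
    by simp
  also have "\<dots> = \<one>\<^bsub>homology_group k X\<^esub>"
    by (rule hom_one[OF hom_induced_empty_hom]) simp_all
  finally show ?thesis by (simp add: one_reduced_homology_group)
qed

lemma homology_split:
  assumes SC: "S \<subseteq> C" and CX: "C \<subseteq> topspace X" and Sne: "S \<noteq> {}"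
    and con: "contractible_space (subtopology X C)"
  shows "inj_on (hom_induced k X {} X S id) (carrier (reduced_homology_group k X))
       \<and> exact_seq ([reduced_homology_group (k - 1) (subtopology X S),
                     relative_homology_group k X S,
                     reduced_homology_group k X],
                    [hom_boundary k X S, hom_induced k X {} X S id])
       \<and> hom_boundary k X S ` carrier (relative_homology_group k X S)
           = carrier (reduced_homology_group (k - 1) (subtopology X S))
       \<and> relative_homology_group k X S \<cong>
         DirProd (reduced_homology_group k X) (reduced_homology_group (k - 1) (subtopology X S))"
proof -
  have ne: "topspace X \<inter> S \<noteq> {}" using SC CX Sne by blast
  let ?A = "reduced_homology_group k X"
  let ?B = "relative_homology_group k X S"
  let ?C = "reduced_homology_group (k - 1) (subtopology X S)"
  let ?f = "hom_induced k X {} X S id"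
  let ?g = "hom_boundary k X S"
  have ex1: "exact_seq ([?C, ?B, ?A], [?g, ?f])"
    by (rule homology_exactness_reduced_1[OF ne])
  note ex3 = homology_exactness_reduced_3[of k X S]
  note ex2 = homology_exactness_reduced_2[of k X S]
  have triv: "\<And>p c. c \<in> carrier (reduced_homology_group p (subtopology X S)) \<Longrightarrow>
      hom_induced p (subtopology X S) {} X {} id c = \<one>\<^bsub>reduced_homology_group p X\<^esub>"
    by (rule triv_inclusion_reduced[OF SC con])
  have inj: "inj_on ?f (carrier ?A)"
  proof -
    interpret gh: group_hom ?A ?B ?f using ex1 by (simp add: group_hom_def group_hom_axioms_def)
    have "kernel ?A ?B ?f = hom_induced k (subtopology X S) {} X {} id ` carrier (reduced_homology_group k (subtopology X S))"
      using ex3 by simp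
    also have "\<dots> = {\<one>\<^bsub>?A\<^esub>}"
      using triv[of _ k] group.subgroup_self[of "reduced_homology_group k (subtopology X S)"]
      by (force simp: subgroup_def)
    finally show ?thesis using gh.trivial_ker_imp_inj by blast
  qed
  have surj: "?g ` carrier ?B = carrier ?C"
  proof -
    have "?g ` carrier ?B = kernel ?C (reduced_homology_group (k - 1) X) (hom_induced (k - 1) (subtopology X S) {} X {} id)"
      using ex2 by simp
    also have "\<dots> = carrier ?C"
      using triv[of _ "k-1"] by (auto simp: kernel_def)
    finally show ?thesis .
  qed
  have ses: "short_exact_sequence ?C ?B ?A ?g ?f"
    unfolding short_exact_sequence_iff
  proof (intro conjI ex1)
    show "?g \<in> epi ?B ?C" using ex1 surj by (simp add: epi_def)
    show "?f \<in> mon ?A ?B" using ex1 inj by (simp add: mon_def)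
  qed
  let ?XC = "subtopology X C"
  let ?RC = "relative_homology_group k ?XC S"
  let ?dC = "hom_boundary k ?XC S"
  have sub: "subtopology ?XC S = subtopology X S"
    using SC by (simp add: subtopology_subtopology Int_absorb1)
  have neC: "topspace ?XC \<inter> S \<noteq> {}" using ne SC by auto
  have isoC: "?dC \<in> iso ?RC ?C"
    using iso_relative_homology_of_contractible[OF con neC, of k] sub by simp
  have isoC': "inv_into (carrier ?RC) ?dC \<in> iso ?C ?RC"
    by (rule group.iso_set_sym[OF _ isoC]) simp
  let ?j = "hom_induced k ?XC S X S id"
  define g' where "g' = ?j \<circ> inv_into (carrier ?RC) ?dC"
  have g'hom: "g' \<in> hom ?C ?B"
    unfolding g'_def
    by (rule hom_compose[OF iso_imp_homomorphism[OF isoC'] hom_induced_hom])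
  have g'inv: "?g (g' z) = z" if z: "z \<in> carrier ?C" for z
  proof -
    define c where "c = inv_into (carrier ?RC) ?dC z"
    have im: "?dC ` carrier ?RC = carrier ?C"
      using isoC unfolding iso_def bij_betw_def by blast
    have c: "c \<in> carrier ?RC" "?dC c = z"
      using z im unfolding c_def by (metis inv_into_into, metis f_inv_into_f)
    have nat: "?g (?j c) = hom_induced (k - 1) (subtopology ?XC S) {} (subtopology X S) {} id (?dC c)"
      using naturality_hom_induced[of ?XC X id S S k]
      by (auto simp: fun_eq_iff continuous_map_from_subtopology)
    have "?dC c \<in> carrier (homology_group (k-1) (subtopology X S))"
      using c z carrier_reduced_homology_group_subset by blast
    then have "hom_induced (k - 1) (subtopology X S) {} (subtopology X S) {} id (?dC c) = ?dC c"
      by (rule hom_induced_id)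
    then show ?thesis
      using nat c sub unfolding g'_def c_def by simp
  qed
  obtain H K where HK: "H \<lhd> ?B" "subgroup K ?B" "H \<inter> K \<subseteq> {one ?B}" "set_mult ?B H K = carrier ?B"
    and iso: "?f \<in> iso ?A (subgroup_generated ?B H)" "?g \<in> iso (subgroup_generated ?B K) ?C"
    by (rule splitting_lemma_right[OF ses g'hom g'inv])
  have "?B \<cong> DirProd (subgroup_generated ?B H) (subgroup_generated ?B K)"
  proof -
    have "(\<lambda>(x, y). x \<otimes>\<^bsub>?B\<^esub> y)
        \<in> Group.iso (subgroup_generated ?B H \<times>\<times> subgroup_generated ?B K) ?B"
      by (meson HK normal_imp_subgroup abelian_relative_homology_group group_disjoint_sum.iso_group_mul group_disjoint_sum_def group_relative_homology_group)
    then show ?thesis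
      by (meson DirProd_group group.group_subgroup_generated group.iso_sym group_relative_homology_group is_isoI)
  qed
  also have "\<dots> \<cong> DirProd ?A ?C"
    by (meson iso group.DirProd_iso_trans group.group_subgroup_generated group.iso_sym group_relative_homology_group group_reduced_homology_group is_isoI)
  finally show ?thesis using inj ex1 surj by blast
qed


lemma Delta_pred:
  assumes "m \<ge> (1::nat)"
  shows "\<sigma> \<in> Delta (m - 1) \<longleftrightarrow> \<sigma> \<in> Delta m \<and> m \<notin> \<sigma>"
proof -
  have "{0..m-1} = {0..m} - {m}" using assms by auto
  then show ?thesis by (auto simp: Delta_def full_simplex_def)
qed

lemma Delta_finite: "\<sigma> \<in> Delta m \<Longrightarrow> finite \<sigma> \<and> \<sigma> \<noteq> {}"
  by (auto simp: Delta_def full_simplex_def intro: finite_subset)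

lemma core_acyclic:
  fixes m :: nat and W W' :: "(nat set \<times> nat set) set"
  assumes m: "m \<ge> 1" and W: "acyclic_matching (Delta (m-1)) W"
    and W': "W' = W \<or> W' = insert ({m},{0,m}) W"
  shows "acyclic_matching (Delta m) W'"
proof -
  define p where "p = ({m},{0::nat,m})"
  have m0: "m \<noteq> 0" using m by simp
  have Wm: "is_matching (Delta (m-1)) W" "acyclic (modified_hasse (Delta (m-1)) W)"
    using W by (auto simp: acyclic_matching_def)
  have hsub: "hasse_edges (Delta (m-1)) \<subseteq> hasse_edges (Delta m)"
    using Delta_pred[OF m] by (auto simp: hasse_edges_def)
  have Wfree: "m \<notin> x \<and> m \<notin> y" if "(x,y) \<in> W" for x y
    using that Wm(1) Delta_pred[OF m] by (auto simp: is_matching_def hasse_edges_def)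
  have pW: "p \<notin> W" using Wfree unfolding p_def by blast
  have ph: "p \<in> hasse_edges (Delta m)"
    using m0 by (auto simp: p_def hasse_edges_def Delta_def full_simplex_def)
  have match: "is_matching (Delta m) W'"
  proof -
    have "W' \<subseteq> hasse_edges (Delta m)"
      using W' Wm(1) hsub ph by (auto simp: is_matching_def p_def)
    moreover have "{fst e, snd e} \<inter> {fst e', snd e'} = {}" if ee: "e \<in> W'" "e' \<in> W'" "e \<noteq> e'" for e e'
    proof -
      consider "e \<in> W" "e' \<in> W" | "e = p" "e' \<in> W" | "e \<in> W" "e' = p"
        using ee W' unfolding p_def by auto
      then show ?thesis
      proof cases
        case 1 then show ?thesis using Wm(1) ee(3) unfolding is_matching_def by blast
      next
        case 2
        obtain a c where ac: "e' = (a,c)" by (cases e')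
        have "m \<notin> a" "m \<notin> c" using Wfree[of a c] 2 ac by auto
        then show ?thesis using 2 ac by (auto simp: p_def)
      next
        case 3
        obtain a c where ac: "e = (a,c)" by (cases e)
        have "m \<notin> a" "m \<notin> c" using Wfree[of a c] 3 ac by auto
        then show ?thesis using 3 ac by (auto simp: p_def)
      qed
    qed
    ultimately show ?thesis unfolding is_matching_def by blast
  qed
  define b where "b = (p \<in> W')"
  define \<phi> :: "nat set \<Rightarrow> nat" where
    "\<phi> \<sigma> = (if b then (if \<sigma> = {0,m} then 0 else if \<sigma> = {m} then 1 else card \<sigma>) else card \<sigma>)" for \<sigma>
  define r where "r = modified_hasse (Delta m) W'"
  define r0 where "r0 = modified_hasse (Delta (m-1)) W"
  define P where "P x y \<longleftrightarrow> (m \<notin> x \<and> m \<notin> y \<and> (x,y) \<in> r0\<^sup>+) \<or> (m \<notin> x \<and> m \<in> y) \<or> (m \<in> x \<and> m \<in> y \<and> \<phi> x < \<phi> y)" for x y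
  have edge: "P x y" if rxy: "(x,y) \<in> r" for x y
  proof -
    consider "(x,y) \<in> hasse_edges (Delta m)" "(x,y) \<notin> W'" | "(y,x) \<in> W'"
      using rxy by (auto simp: r_def modified_hasse_def)
    then show ?thesis
    proof cases
      case 1
      then have xy: "x \<in> Delta m" "y \<in> Delta m" "x \<subset> y" "card y = card x + 1"
        by (auto simp: hasse_edges_def)
      have fx: "finite x" "x \<noteq> {}" "finite y" using xy Delta_finite by auto
      show ?thesis
      proof (cases "m \<in> y")
        case False
        then have "m \<notin> x" using xy by auto
        then have "(x,y) \<in> hasse_edges (Delta (m-1))" using False xy Delta_pred[OF m]
          by (auto simp: hasse_edges_def)
        moreover have "(x,y) \<notin> W" using 1 W' by auto
        ultimately have "(x,y) \<in> r0" by (auto simp: r0_def modified_hasse_def)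
        then show ?thesis using False \<open>m \<notin> x\<close> by (auto simp: P_def)
      next
        case True
        show ?thesis
        proof (cases "m \<in> x")
          case False then show ?thesis using True by (auto simp: P_def)
        next
          case mx: True
          have "\<phi> x < \<phi> y"
          proof (cases b)
            case False then show ?thesis using xy by (simp add: \<phi>_def)
          next
            case bt: True
            then have pW': "p \<in> W'" by (simp add: b_def)
            have c2: "card y \<ge> 2" using xy fx by (simp add: card_gt_0_iff Suc_le_eq)
            show ?thesis
            proof (cases "x = {0,m}")
              case True
              then have "card y = 3" using xy m0 by simp
              then have "y \<noteq> {0,m}" "y \<noteq> {m}" using m0 by auto
              then show ?thesis using True bt \<open>card y = 3\<close> by (simp add: \<phi>_def)
            next
              case xn0: False
              show ?thesis
              proof (cases "x = {m}")
                case True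
                then have "y \<noteq> {0,m}" using 1 pW' by (auto simp: p_def)
                moreover have "y \<noteq> {m}" using xy True by auto
                ultimately show ?thesis using True bt c2 xn0 by (simp add: \<phi>_def)
              next
                case False
                have "y \<noteq> {0,m}"
                proof
                  assume "y = {0,m}"
                  then have "card x = 1" using xy m0 by simp
                  then obtain a where "x = {a}" by (auto simp: card_Suc_eq)
                  then show False using mx False by simp
                qed
                moreover have "y \<noteq> {m}" using c2 by auto
                ultimately show ?thesis using False xn0 bt xy by (simp add: \<phi>_def)
              qed
            qed
          qed
          then show ?thesis using mx True by (auto simp: P_def)
        qed
      qed
    next
      case 2
      then consider "(y,x) \<in> W" | "(y,x) = p" using W' by (auto simp: p_def)
      then show ?thesis
      proof cases
        case 1
        then have "(x,y) \<in> r0" by (auto simp: r0_def modified_hasse_def)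
        then show ?thesis using Wfree[OF 1] by (auto simp: P_def)
      next
        case 2
        then have "b" using \<open>(y,x) \<in> W'\<close> by (simp add: b_def)
        then show ?thesis using 2 m0 by (auto simp: P_def p_def \<phi>_def)
      qed
    qed
  qed
  have path: "P x y" if "(x,y) \<in> r\<^sup>+" for x y
    using that
  proof (induction rule: trancl_induct)
    case (base y) then show ?case by (rule edge)
  next
    case (step y z)
    have e: "P y z" using step(2) by (rule edge)
    have t: "(x,y) \<in> r0\<^sup>+ \<Longrightarrow> (y,z) \<in> r0\<^sup>+ \<Longrightarrow> (x,z) \<in> r0\<^sup>+"
      by (rule trancl_trans)
    from step(3) e show ?case
      unfolding P_def using t by (elim disjE conjE) simp_all
  qed
  have "acyclic r"
    unfolding acyclic_def
  proof
    fix x show "(x,x) \<notin> r\<^sup>+"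
    proof
      assume "(x,x) \<in> r\<^sup>+"
      then have "P x x" by (rule path)
      then have "(x,x) \<in> r0\<^sup>+" by (auto simp: P_def)
      then show False using Wm(2) by (auto simp: r0_def acyclic_def)
    qed
  qed
  then show ?thesis using match by (simp add: acyclic_matching_def r_def)
qed

lemma star_contractible:
  fixes C :: "('a \<Rightarrow> real) set" and d :: "'a \<Rightarrow> real"
  assumes st: "\<And>g s. g \<in> C \<Longrightarrow> 0 \<le> s \<Longrightarrow> s \<le> 1 \<Longrightarrow> (\<lambda>e. (1-s) * g e + s * d e) \<in> C"
  shows "contractible_space (subtopology (powertop_real UNIV) C)"
proof -
  define h where "h = (\<lambda>x::real \<times> ('a \<Rightarrow> real). \<lambda>e. (1 - fst x) * snd x e + fst x * d e)"
  let ?T = "prod_topology (top_of_set {0..1::real}) (subtopology (powertop_real UNIV) C)"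
  have cfst: "continuous_map ?T euclideanreal fst"
    using continuous_map_fst[of "top_of_set {0..1::real}" "subtopology (powertop_real UNIV) C"]
    by (simp add: continuous_map_in_subtopology)
  have csnd: "continuous_map ?T euclideanreal (\<lambda>x. snd x e)" for e
  proof -
    have "continuous_map ?T (powertop_real UNIV) snd"
      using continuous_map_snd[of "top_of_set {0..1::real}" "subtopology (powertop_real UNIV) C"]
      by (simp add: continuous_map_in_subtopology)
    then show ?thesis
      using continuous_map_compose[OF _ continuous_map_product_projection[of e UNIV "\<lambda>_. euclideanreal"]]
      by (simp add: o_def)
  qed
  have "continuous_map ?T (powertop_real UNIV) h"
    unfolding continuous_map_componentwise_UNIV h_def
    by (intro allI continuous_intros cfst csnd)
  moreover have "h ` topspace ?T \<subseteq> C"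
    using st by (auto simp: h_def)
  ultimately have "continuous_map ?T (subtopology (powertop_real UNIV) C) h"
    by (simp add: continuous_map_in_subtopology image_subset_iff Pi_iff)
  moreover have "\<forall>x. h (0, x) = id x" "\<forall>x. h (1, x) = d"
    by (auto simp: h_def)
  ultimately show ?thesis
    unfolding contractible_space_def homotopic_with_def by blast
qed

lemma acyclic_empty: "acyclic_matching (Delta m) {}"
proof -
  have "hasse_edges (Delta m) \<subseteq> measure card"
    by (auto simp: hasse_edges_def)
  then have "wf (hasse_edges (Delta m))" by (rule wf_subset[OF wf_measure])
  then have "acyclic (hasse_edges (Delta m))" by (rule wf_acyclic)
  then show ?thesis
    by (simp add: acyclic_matching_def is_matching_def modified_hasse_def)
qed

lemma finite_hasse: "finite (hasse_edges (Delta m))"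
proof -
  have "Delta m \<subseteq> Pow {0..m}" by (auto simp: Delta_def full_simplex_def)
  then have "finite (Delta m)" by (rule finite_subset) simp
  moreover have "hasse_edges (Delta m) \<subseteq> Delta m \<times> Delta m" by (auto simp: hasse_edges_def)
  ultimately show ?thesis by (meson finite_SigmaI finite_subset)
qed

lemma finite_acyclic_matching: "acyclic_matching (Delta m) W \<Longrightarrow> finite W"
  using finite_hasse[of m] by (auto simp: acyclic_matching_def is_matching_def intro: finite_subset)

lemma sum_supp_eq:
  fixes g :: "'a \<Rightarrow> real"
  assumes "finite F" "{v. g v \<noteq> 0} \<subseteq> F"
  shows "sum g {v. g v \<noteq> 0} = sum g F"
  by (rule sum.mono_neutral_left) (use assms in auto)


theorem mainTheorem8:
  fixes n :: nat
  assumes "n \<ge> 2"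
  defines "X \<equiv> realization (morse_complex (Delta n))"
      and "A \<equiv> realization (morse_complex (Delta (n - 1)))"
  shows "(\<exists>c. homotopic_with (\<lambda>_. True) A X id (\<lambda>_. c))
    \<and> (\<forall>k::int.
         inj_on (hom_induced k X {} X (topspace A) id) (carrier (reduced_homology_group k X))
       \<and> exact_seq ([reduced_homology_group (k - 1) (subtopology X (topspace A)),
                     relative_homology_group k X (topspace A),
                     reduced_homology_group k X],
                    [hom_boundary k X (topspace A), hom_induced k X {} X (topspace A) id])
       \<and> hom_boundary k X (topspace A) ` carrier (relative_homology_group k X (topspace A))
           = carrier (reduced_homology_group (k - 1) (subtopology X (topspace A))))
    \<and> (\<forall>k::int. relative_homology_group k X (topspace A) \<cong>
         DirProd (reduced_homology_group k X) (reduced_homology_group (k - 1) (subtopology X (topspace A))))"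
proof -
  have n1: "n - 1 \<ge> 1" "n \<ge> 1" using assms(1) by auto
  define p where "p = ({n},{0::nat,n})"
  define d :: "(nat set \<times> nat set) \<Rightarrow> real" where "d = (\<lambda>e. if e = p then 1 else 0)"
  define SX where "SX = {f :: (nat set \<times> nat set) \<Rightarrow> real. (\<forall>v. 0 \<le> f v) \<and> {v. f v \<noteq> 0} \<in> morse_complex (Delta n) \<and> sum f {v. f v \<noteq> 0} = 1}"
  define SA where "SA = {f :: (nat set \<times> nat set) \<Rightarrow> real. (\<forall>v. 0 \<le> f v) \<and> {v. f v \<noteq> 0} \<in> morse_complex (Delta (n-1)) \<and> sum f {v. f v \<noteq> 0} = 1}"
  define C where "C = {g :: (nat set \<times> nat set) \<Rightarrow> real. (\<forall>v. 0 \<le> g v) \<and> sum g {v. g v \<noteq> 0} = 1 \<and> acyclic_matching (Delta (n-1)) ({v. g v \<noteq> 0} - {p})}"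
  have Xeq: "X = subtopology (powertop_real UNIV) SX"
    by (simp add: X_def SX_def realization_def)
  have Aeq: "A = subtopology (powertop_real UNIV) SA"
    by (simp add: A_def SA_def realization_def)
  have tX: "topspace X = SX" by (simp add: Xeq)
  have tA: "topspace A = SA" by (simp add: Aeq)
  have pnot: "p \<notin> hasse_edges (Delta (n-1))"
    using Delta_pred[OF n1(2)] by (auto simp: p_def hasse_edges_def)
  have SAC: "SA \<subseteq> C"
  proof
    fix f assume f: "f \<in> SA"
    then have am: "acyclic_matching (Delta (n-1)) {v. f v \<noteq> 0}"
      by (auto simp: SA_def morse_complex_def)
    then have "p \<notin> {v. f v \<noteq> 0}"
      using pnot by (auto simp: acyclic_matching_def is_matching_def)
    then have "{v. f v \<noteq> 0} - {p} = {v. f v \<noteq> 0}" by blast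
    then show "f \<in> C" using f am by (simp add: SA_def C_def)
  qed
  have CSX: "C \<subseteq> SX"
  proof
    fix g assume g: "g \<in> C"
    let ?W = "{v. g v \<noteq> 0} - {p}"
    have W: "acyclic_matching (Delta (n-1)) ?W" using g by (simp add: C_def)
    have "{v. g v \<noteq> 0} = ?W \<or> {v. g v \<noteq> 0} = insert ({n},{0,n}) ?W"
      by (auto simp: p_def)
    then have "acyclic_matching (Delta n) {v. g v \<noteq> 0}"
      by (rule core_acyclic[OF n1(2) W])
    moreover have "{v. g v \<noteq> 0} \<noteq> {}"
    proof
      assume e: "{v. g v \<noteq> 0} = {}"
      have "sum g {v. g v \<noteq> 0} = 0" unfolding e by (rule sum.empty)
      then show False using g by (simp add: C_def)
    qed
    ultimately show "g \<in> SX" using g by (simp add: SX_def C_def morse_complex_def)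
  qed
  have star: "(\<lambda>e. (1-s) * g e + s * d e) \<in> C" if g: "g \<in> C" and s: "0 \<le> s" "s \<le> 1" for g s
  proof -
    define h where "h = (\<lambda>e. (1-s) * g e + s * d e)"
    let ?W = "{v. g v \<noteq> 0} - {p}"
    have W: "acyclic_matching (Delta (n-1)) ?W" and g0: "\<forall>v. 0 \<le> g v" and g1: "sum g {v. g v \<noteq> 0} = 1"
      using g by (auto simp: C_def)
    define F where "F = insert p ?W"
    have fF: "finite F" using finite_acyclic_matching[OF W] by (simp add: F_def)
    have h0: "\<forall>v. 0 \<le> h v" using g0 s by (simp add: h_def d_def)
    have hW: "{v. h v \<noteq> 0} - {p} = (if s = 1 then {} else ?W)"
      by (auto simp: h_def d_def)
    have hW': "acyclic_matching (Delta (n-1)) ({v. h v \<noteq> 0} - {p})"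
      unfolding hW using W acyclic_empty by simp
    have gF: "{v. g v \<noteq> 0} \<subseteq> F" by (auto simp: F_def)
    have hF: "{v. h v \<noteq> 0} \<subseteq> F" by (auto simp: F_def h_def d_def)
    have "sum h {v. h v \<noteq> 0} = sum h F" by (rule sum_supp_eq[OF fF hF])
    also have "\<dots> = (1-s) * sum g F + s * sum d F"
      by (simp add: h_def sum.distrib sum_distrib_left)
    also have "sum g F = 1" using g1 sum_supp_eq[OF fF gF] by simp
    also have "sum d F = 1" using fF by (simp add: d_def F_def)
    finally have "sum h {v. h v \<noteq> 0} = 1" by simp
    then show ?thesis using h0 hW' unfolding h_def C_def by simp
  qed
  have XC: "subtopology X C = subtopology (powertop_real UNIV) C"
    using CSX by (simp add: Xeq subtopology_subtopology Int_absorb1)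
  have con: "contractible_space (subtopology X C)"
    unfolding XC by (rule star_contractible[OF star])
  have Asub: "A = subtopology X SA"
    using SAC CSX by (simp add: Xeq Aeq subtopology_subtopology Int_absorb1 Int_absorb2)
  define p' where "p' = ({n-1},{0::nat,n-1})"
  define d' :: "(nat set \<times> nat set) \<Rightarrow> real" where "d' = (\<lambda>e. if e = p' then 1 else 0)"
  have acy: "acyclic_matching (Delta (n-1)) (insert p' {})"
    unfolding p'_def by (rule core_acyclic[OF n1(1) acyclic_empty]) simp
  have s1: "{v. d' v \<noteq> 0} = {p'}" by (auto simp: d'_def)
  have "d' \<in> SA"
    unfolding SA_def mem_Collect_eq s1 using acy by (simp add: d'_def morse_complex_def)
  then have SAne: "SA \<noteq> {}" by blast
  have nh: "\<exists>c. homotopic_with (\<lambda>_. True) A X id (\<lambda>_. c)"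
  proof -
    have f: "continuous_map A (subtopology X C) id"
      using SAC by (auto simp: Asub continuous_map_in_subtopology continuous_map_from_subtopology Pi_iff)
    have g: "continuous_map (subtopology X C) X id"
      by (simp add: continuous_map_from_subtopology)
    obtain c where "homotopic_with (\<lambda>h. True) A X (id \<circ> id) (\<lambda>x. c)"
      by (rule nullhomotopic_through_contractible_space[OF f g con])
    then show ?thesis by auto
  qed
  have hs: "\<And>k. inj_on (hom_induced k X {} X (topspace A) id) (carrier (reduced_homology_group k X))
       \<and> exact_seq ([reduced_homology_group (k - 1) (subtopology X (topspace A)),
                     relative_homology_group k X (topspace A),
                     reduced_homology_group k X],
                    [hom_boundary k X (topspace A), hom_induced k X {} X (topspace A) id])
       \<and> hom_boundary k X (topspace A) ` carrier (relative_homology_group k X (topspace A))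
           = carrier (reduced_homology_group (k - 1) (subtopology X (topspace A)))
       \<and> relative_homology_group k X (topspace A) \<cong>
         DirProd (reduced_homology_group k X) (reduced_homology_group (k - 1) (subtopology X (topspace A)))"
    by (rule homology_split) (use SAC CSX SAne con tA tX in auto)
  show ?thesis using nh hs by blast
qed

end
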